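(* Let $\Gamma=(V,m,\tau)$ be a weak $W$-graph and let $A\subseteq\Delta$. Then the representation $\mathbb{C}V$, restricted to $W(A)$, contains a copy of the sign representation of $W(A)$ if and only if $A\subseteq\tau(v)$ for some $v\in V$.
   Context: $W$ is a Weyl group with a fixed set $\Delta$ of simple roots; for a root $\alpha$, $s_\alpha$ is the reflection in the hyperplane orthogonal to $\alpha$. A weak $W$-graph is a triple $\Gamma=(V,m,\tau)$ where $V$ is a finite set, $m:V\times V\to\mathbb{C}$ is a map, and $\tau$ is a map from $V$ to the power set of $\Delta$, such that the linear maps $s_\alpha:\mathbb{C}V\to\mathbb{C}V$ ($\alpha\in\Delta$) given on basis vectors by $s_\alpha(v)=-v$ if $\alpha\in\tau(v)$ and $s_\alpha(v)=v-\sum_{u\in V,\ \alpha\in\tau(u)} m(u,v)u$ if $\alpha\notin\tau(v)$ define a representation of $W$ on $\mathbb{C}V$. For $A\subseteq\Delta$, $W(A)$ is the subgroup of $W$ generated by $\{s_\alpha:\alpha\in A\}$; its sign representation is the one-dimensional representation on which each $s_\alpha$, $\alpha\in A$, acts by $-1$. *)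

theory Defs
  imports "HOL-Analysis.Analysis"
begin

definition refl :: "real^'n \<Rightarrow> real^'n \<Rightarrow> real^'n" where
  "refl \<alpha> x = x - ((2 * inner x \<alpha>) / inner \<alpha> \<alpha>) *\<^sub>R \<alpha>"

definition root_system :: "(real^'n) set \<Rightarrow> bool" where
  "root_system \<Phi> \<longleftrightarrow> finite \<Phi> \<and> 0 \<notin> \<Phi>
     \<and> (\<forall>\<alpha>\<in>\<Phi>. refl \<alpha> ` \<Phi> = \<Phi>)
     \<and> (\<forall>\<alpha>\<in>\<Phi>. \<forall>\<beta>\<in>\<Phi>. (2 * inner \<beta> \<alpha>) / inner \<alpha> \<alpha> \<in> \<int>)
     \<and> (\<forall>\<alpha>\<in>\<Phi>. \<forall>c::real. c *\<^sub>R \<alpha> \<in> \<Phi> \<longrightarrow> c = 1 \<or> c = -1)"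

definition simple_system :: "(real^'n) set \<Rightarrow> (real^'n) set \<Rightarrow> bool" where
  "simple_system \<Phi> \<Delta> \<longleftrightarrow> \<Delta> \<subseteq> \<Phi> \<and> independent \<Delta>
     \<and> (\<forall>\<beta>\<in>\<Phi>. \<exists>c :: real^'n \<Rightarrow> real.
          (\<forall>\<alpha>\<in>\<Delta>. c \<alpha> \<in> \<int>)
          \<and> ((\<forall>\<alpha>\<in>\<Delta>. c \<alpha> \<ge> 0) \<or> (\<forall>\<alpha>\<in>\<Delta>. c \<alpha> \<le> 0))
          \<and> \<beta> = (\<Sum>\<alpha>\<in>\<Delta>. c \<alpha> *\<^sub>R \<alpha>))"

inductive_set gen_group :: "('a \<Rightarrow> 'a) set \<Rightarrow> ('a \<Rightarrow> 'a) set" for S where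
  gen_id: "id \<in> gen_group S"
| gen_step: "s \<in> S \<Longrightarrow> w \<in> gen_group S \<Longrightarrow> s \<circ> w \<in> gen_group S"

definition weyl_group :: "(real^'n) set \<Rightarrow> (real^'n \<Rightarrow> real^'n) set" where
  "weyl_group \<Phi> = gen_group (refl ` \<Phi>)"

definition parabolic :: "(real^'n) set \<Rightarrow> (real^'n \<Rightarrow> real^'n) set" where
  "parabolic A = gen_group (refl ` A)"

text \<open>Sign character: each reflection s_alpha acts by -1 (equals the determinant).\<close>
definition sign_char :: "(real^'n \<Rightarrow> real^'n) \<Rightarrow> complex" where
  "sign_char w = complex_of_real (det (matrix w))"

definition wg_basis_img ::
  "('v::finite \<Rightarrow> 'v \<Rightarrow> complex) \<Rightarrow> ('v \<Rightarrow> 'r set) \<Rightarrow> 'r \<Rightarrow> 'v \<Rightarrow> complex^'v" where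
  "wg_basis_img m \<tau> \<alpha> v =
     (if \<alpha> \<in> \<tau> v then - axis v 1
      else axis v 1 - (\<Sum>u\<in>{u. \<alpha> \<in> \<tau> u}. m u v *s axis u 1))"

definition wg_op ::
  "('v::finite \<Rightarrow> 'v \<Rightarrow> complex) \<Rightarrow> ('v \<Rightarrow> 'r set) \<Rightarrow> 'r \<Rightarrow> complex^'v \<Rightarrow> complex^'v" where
  "wg_op m \<tau> \<alpha> x = (\<Sum>v\<in>UNIV. x $ v *s wg_basis_img m \<tau> \<alpha> v)"

text \<open>rho is a representation of W on CV in which each simple reflection s_alpha
  acts by the operator defined by (m,tau); its existence is the weak W-graph axiom.\<close>
definition weak_W_graph_rep ::
  "(real^'n) set \<Rightarrow> (real^'n) set \<Rightarrow> ('v::finite \<Rightarrow> 'v \<Rightarrow> complex) \<Rightarrow> ('v \<Rightarrow> (real^'n) set)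
   \<Rightarrow> ((real^'n \<Rightarrow> real^'n) \<Rightarrow> (complex^'v \<Rightarrow> complex^'v)) \<Rightarrow> bool" where
  "weak_W_graph_rep \<Phi> \<Delta> m \<tau> \<rho> \<longleftrightarrow>
     (\<forall>v. \<tau> v \<subseteq> \<Delta>)
     \<and> \<rho> id = id
     \<and> (\<forall>w1\<in>weyl_group \<Phi>. \<forall>w2\<in>weyl_group \<Phi>. \<rho> (w1 \<circ> w2) = \<rho> w1 \<circ> \<rho> w2)
     \<and> (\<forall>\<alpha>\<in>\<Delta>. \<rho> (refl \<alpha>) = wg_op m \<tau> \<alpha>)"

end

theory Submission imports Defs begin

lemma refl_linear: "linear (refl a)"
proof -
  have e: "refl a = (\<lambda>x. x - (inner x a * (2 / inner a a)) *\<^sub>R a)"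
    by (auto simp: refl_def fun_eq_iff)
  have "linear (\<lambda>x. x - (inner x a * c) *\<^sub>R a)" for c
  proof (rule linearI)
    fix x y show "x + y - ((x + y) \<bullet> a * c) *\<^sub>R a = x - (x \<bullet> a * c) *\<^sub>R a + (y - (y \<bullet> a * c) *\<^sub>R a)"
      by (simp add: inner_add_left distrib_right scaleR_add_left algebra_simps)
  next
    fix r :: real and x show "r *\<^sub>R x - ((r *\<^sub>R x) \<bullet> a * c) *\<^sub>R a = r *\<^sub>R (x - (x \<bullet> a * c) *\<^sub>R a)"
      by (simp add: scaleR_right_diff_distrib mult.assoc)
  qed
  then show ?thesis unfolding e .
qed

lemma refl_scale: "c \<noteq> 0 \<Longrightarrow> refl (c *\<^sub>R a) = refl a"
  unfolding refl_def by (auto simp: fun_eq_iff power2_eq_square)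

lemma refl_orth:
  assumes "orthogonal_transformation f"
  shows "refl (f b) \<circ> f = f \<circ> refl b"
proof
  fix x
  have l: "linear f" and i: "\<And>v w. f v \<bullet> f w = v \<bullet> w" using assms by (auto simp: orthogonal_transformation_def)
  show "(refl (f b) \<circ> f) x = (f \<circ> refl b) x"
    by (simp add: refl_def i linear_diff[OF l] linear_scale[OF l])
qed

lemma det_refl_axis: "det (matrix (refl (axis k 1 :: real^'n))) = -1"
proof -
  have m: "matrix (refl (axis k 1 :: real^'n)) $ i $ j = (if i = j then (if i = k then -1 else 1) else 0)" for i j
  proof -
    have ax: "axis j (1::real) $ i = (if i = j then 1 else 0)" for i j :: 'n by (simp add: axis_def)
    show ?thesis by (simp add: matrix_def refl_def inner_axis_axis ax)
  qed
  have "det (matrix (refl (axis k 1 :: real^'n))) = (\<Prod>i\<in>UNIV. if i = k then -1 else 1)"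
    by (subst det_diagonal) (auto simp: m)
  also have "\<dots> = -1"
    by (subst prod.remove[of _ k]) auto
  finally show ?thesis .
qed

lemma det_refl: assumes "(a::real^'n) \<noteq> 0" shows "det (matrix (refl a)) = -1"
proof -
  obtain k :: 'n where True by auto
  define b where "b = norm a *\<^sub>R axis k (1::real)"
  have nb: "norm a = norm b" by (simp add: b_def)
  obtain f where f: "orthogonal_transformation f" "f b = a"
    using orthogonal_transformation_exists[OF nb[symmetric]] by blast
  have lf: "linear f" using f(1) by (simp add: orthogonal_transformation_def)
  have eq: "refl a \<circ> f = f \<circ> refl b" using refl_orth[OF f(1), of b] f(2) by simp
  have c1: "matrix (refl a \<circ> f) = matrix (refl a) ** matrix f"
    by (rule matrix_compose[OF lf refl_linear])
  have c2: "matrix (f \<circ> refl b) = matrix f ** matrix (refl b)"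
    by (rule matrix_compose[OF refl_linear lf])
  have d: "det (matrix (refl a)) * det (matrix f) = det (matrix f) * det (matrix (refl b))"
    using c1 c2 eq det_mul by metis
  have "orthogonal_matrix (matrix f)" using f(1) orthogonal_transformation_matrix by blast
  then have "det (matrix f) \<noteq> 0" using det_orthogonal_matrix[of "matrix f"] by auto
  then have "det (matrix (refl a)) = det (matrix (refl b))" using d by (simp add: mult.commute)
  also have "refl b = refl (axis k 1)" unfolding b_def using assms by (simp add: refl_scale)
  finally show ?thesis by (simp add: det_refl_axis)
qed

lemma wg_op_nth_out:
  assumes "\<alpha> \<notin> \<tau> u"
  shows "wg_op m \<tau> \<alpha> x $ u = x $ u"
proof -
  have img: "wg_basis_img m \<tau> \<alpha> v $ u = (if v = u then 1 else 0)" for v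
  proof -
    have "(\<Sum>u'\<in>{u. \<alpha> \<in> \<tau> u}. m u' v *s axis u' (1::complex)) $ u = 0"
      using assms by (auto simp: sum_component axis_def intro!: sum.neutral)
    then show ?thesis using assms
      by (auto simp: wg_basis_img_def axis_def)
  qed
  show ?thesis
    by (simp add: wg_op_def sum_component img if_distrib cong: if_cong)
qed

lemma wg_op_axis_in:
  assumes "\<alpha> \<in> \<tau> v"
  shows "wg_op m \<tau> \<alpha> (c *s axis v 1) = - (c *s axis v 1)"
proof -
  have "wg_op m \<tau> \<alpha> (c *s axis v 1) = (\<Sum>w\<in>UNIV. (if w = v then c *s wg_basis_img m \<tau> \<alpha> v else 0))"
    unfolding wg_op_def by (rule sum.cong) (auto simp: axis_def)
  also have "\<dots> = c *s wg_basis_img m \<tau> \<alpha> v" by simp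
  finally show ?thesis using assms by (simp add: wg_basis_img_def)
qed

theorem corollary2p9:
  fixes \<Phi> \<Delta> A :: "(real^'n) set"
    and m :: "'v::finite \<Rightarrow> 'v \<Rightarrow> complex"
    and \<tau> :: "'v \<Rightarrow> (real^'n) set"
    and \<rho> :: "(real^'n \<Rightarrow> real^'n) \<Rightarrow> (complex^'v \<Rightarrow> complex^'v)"
  assumes "root_system \<Phi>"
    and "simple_system \<Phi> \<Delta>"
    and "weak_W_graph_rep \<Phi> \<Delta> m \<tau> \<rho>"
    and "A \<subseteq> \<Delta>"
  shows "(\<exists>x. x \<noteq> 0 \<and> (\<forall>w\<in>parabolic A. \<rho> w x = sign_char w *s x))
         \<longleftrightarrow> (\<exists>v. A \<subseteq> \<tau> v)"
proof -
  have DP: "\<Delta> \<subseteq> \<Phi>" using assms(2) by (simp add: simple_system_def)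
  have P0: "0 \<notin> \<Phi>" using assms(1) by (simp add: root_system_def)
  have rid: "\<rho> id = id"
    and rhom: "\<And>w1 w2. w1 \<in> weyl_group \<Phi> \<Longrightarrow> w2 \<in> weyl_group \<Phi> \<Longrightarrow> \<rho> (w1 \<circ> w2) = \<rho> w1 \<circ> \<rho> w2"
    and rgen: "\<And>\<alpha>. \<alpha> \<in> \<Delta> \<Longrightarrow> \<rho> (refl \<alpha>) = wg_op m \<tau> \<alpha>"
    using assms(3) by (auto simp: weak_W_graph_rep_def)
  have sgn: "sign_char (refl \<alpha>) = -1" if "\<alpha> \<in> A" for \<alpha>
  proof -
    have "\<alpha> \<noteq> 0" using that assms(4) DP P0 by auto
    then show ?thesis by (simp add: sign_char_def det_refl)
  qed
  have reflW: "refl \<alpha> \<in> weyl_group \<Phi>" if "\<alpha> \<in> \<Phi>" for \<alpha>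
    using gen_step[OF imageI[OF that] gen_id, of refl] by (simp add: weyl_group_def)
  have reflA: "refl \<alpha> \<in> parabolic A" if "\<alpha> \<in> A" for \<alpha>
    using gen_step[OF imageI[OF that] gen_id, of refl] by (simp add: parabolic_def)
  show ?thesis
  proof
    assume "\<exists>x. x \<noteq> 0 \<and> (\<forall>w\<in>parabolic A. \<rho> w x = sign_char w *s x)"
    then obtain x where x0: "x \<noteq> 0" and xw: "\<forall>w\<in>parabolic A. \<rho> w x = sign_char w *s x" by blast
    obtain u where xu: "x $ u \<noteq> 0" using x0 by (auto simp: vec_eq_iff)
    have "\<alpha> \<in> \<tau> u" if "\<alpha> \<in> A" for \<alpha>
    proof (rule ccontr)
      assume n: "\<alpha> \<notin> \<tau> u"
      have h: "\<rho> (refl \<alpha>) x = sign_char (refl \<alpha>) *s x" using xw reflA[OF that] by blast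
      have "wg_op m \<tau> \<alpha> x = (-1) *s x"
        using h sgn[OF that] rgen[of \<alpha>] that assms(4) by auto
      then have "wg_op m \<tau> \<alpha> x = - x" by (metis vector_sneg_minus1)
      then have "x $ u = - x $ u" using wg_op_nth_out[of \<alpha> \<tau> u m x] n by (metis vector_uminus_component)
      then show False using xu by simp
    qed
    then show "\<exists>v. A \<subseteq> \<tau> v" by blast
  next
    assume "\<exists>v. A \<subseteq> \<tau> v"
    then obtain v where Av: "A \<subseteq> \<tau> v" by blast
    define x :: "complex^'v" where "x = axis v 1"
    have "w \<in> weyl_group \<Phi> \<and> linear w \<and> \<rho> w x = sign_char w *s x" if "w \<in> parabolic A" for w
      using that unfolding parabolic_def
    proof (induction rule: gen_group.induct)
      case gen_id
      have i1: "id \<in> weyl_group \<Phi>" unfolding weyl_group_def by (rule gen_group.gen_id)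
      have i2: "sign_char id = 1" unfolding sign_char_def matrix_id_mat_1 by simp
      have "id \<in> weyl_group \<Phi> \<and> linear id \<and> \<rho> id x = sign_char id *s x"
        using i1 linear_id by (simp only: i2 rid id_apply vector_smult_lid simp_thms)
      then show ?case unfolding id_def .
    next
      case (gen_step s w)
      then obtain \<alpha> where a: "\<alpha> \<in> A" and s: "s = refl \<alpha>" by auto
      have aD: "\<alpha> \<in> \<Delta>" using a assms(4) by auto
      have sW: "s \<in> weyl_group \<Phi>" using s reflW aD DP by auto
      have "s \<circ> w \<in> weyl_group \<Phi>"
        using gen_step.IH s aD DP unfolding weyl_group_def by (auto intro: gen_group.gen_step)
      moreover have "linear (s \<circ> w)" using gen_step.IH s refl_linear linear_compose by blast
      moreover have "sign_char (s \<circ> w) = - sign_char w"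
      proof -
        have lw: "linear w" using gen_step.IH by blast
        have mc: "matrix (s \<circ> w) = matrix s ** matrix w"
          using matrix_compose[OF lw, of s] s refl_linear by auto
        have "\<alpha> \<noteq> 0" using aD DP P0 by auto
        then have ds: "det (matrix s) = -1" using s det_refl by simp
        show ?thesis unfolding sign_char_def mc det_mul ds by simp
      qed
      moreover have "\<rho> (s \<circ> w) x = - sign_char w *s x"
        using rhom[OF sW] gen_step.IH s rgen[OF aD] wg_op_axis_in[of \<alpha> \<tau> v m] a Av
        by (auto simp: x_def)
      ultimately have "s \<circ> w \<in> weyl_group \<Phi> \<and> linear (s \<circ> w) \<and> \<rho> (s \<circ> w) x = sign_char (s \<circ> w) *s x"
        by (metis vector_sneg_minus1 vector_smult_assoc mult_minus1)
      then show ?case unfolding comp_def .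
    qed
    moreover have "x \<noteq> 0" by (simp add: x_def)
    ultimately show "\<exists>x. x \<noteq> 0 \<and> (\<forall>w\<in>parabolic A. \<rho> w x = sign_char w *s x)" by blast
  qed
qed

end
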